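(* Let $\mathsf{T}$ be a rooted plane tree and $\delta\in\mathcal{O}(\mathsf{T})$. (i) For every $v\in\mathsf{T}$ and every $u\in M_\delta(v)$, the ornamentation $\delta_u^v$ is covered by $\delta$ in $\mathcal{O}(\mathsf{T})$. (ii) For every ornamentation $\delta'$ covered by $\delta$ in $\mathcal{O}(\mathsf{T})$, there exist $v\in\mathsf{T}$ and $u\in M_\delta(v)$ such that $\delta'=\delta_u^v$. (iii) For all $v\in\mathsf{T}$, $\mathsf{Pop}(\delta)(v)=\bigcap_{u\in M_\delta(v)}\delta_u^v(v)$ (where the empty intersection is interpreted as $\delta(v)$).
   Context: A rooted plane tree $\mathsf{T}$ is a finite tree with a distinguished root, regarded as a poset $\leq_\mathsf{T}$ in which $v'\leq_\mathsf{T} v$ iff $v$ lies on the path from $v'$ to the root. An ornament is a nonempty set of nodes inducing a connected subgraph. For a set $S$ of nodes and $u\in S$, $\Delta_S(u)=\{w\in S:w\leq_\mathsf{T} u\}$. An ornamentation is a map $\delta$ from $\mathsf{T}$ to ornaments such that the unique maximal element of $\delta(v)$ is $v$ and any two sets $\delta(v),\delta(v')$ are nested or disjoint. $\mathcal{O}(\mathsf{T})$ is the set of ornamentations ordered by $\delta\leq\delta'$ iff $\delta(v)\subseteq\delta'(v)$ for all $v$; it is a lattice with meet given by pointwise intersection. $\mathsf{Pop}(\delta)=\bigwedge(\{\delta\}\cup\{\delta':\delta'\lessdot\delta\})$. For distinct nodes $u,v$, $v$ wraps $u$ in $\delta$ if $\delta(u)\subseteq\delta(v)$ and there is no node $w$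 with $\delta(u)\subsetneq\delta(w)\subsetneq\delta(v)$. When $v$ wraps $u$, the reduction of $\delta(v)$ by $u$ is $\delta(v)\setminus\Delta_{\delta(v)}(u)$, and $\delta_u^v$ is the ornamentation with $\delta_u^v(v)=\delta(v)\setminus\Delta_{\delta(v)}(u)$ and $\delta_u^v(w)=\delta(w)$ for $w\neq v$. A minimal reduction of $\delta(v)$ is a reduction of $\delta(v)$ (by some node wrapped by $v$) that is not properly contained in any other reduction of $\delta(v)$. $M_\delta(v)$ is the set of nodes $u\in\delta(v)$ wrapped by $v$ such that $\delta(v)\setminus\Delta_{\delta(v)}(u)$ is a minimal reduction of $\delta(v)$. *)

theory Defs
  imports Main
begin

text \<open>A rooted (plane) tree is given by a finite node set V, a root r and a parent map p.
  The plane structure (order of children) plays no role in the statement and is omitted.\<close>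

definition rooted_tree :: "'a set \<Rightarrow> 'a \<Rightarrow> ('a \<Rightarrow> 'a) \<Rightarrow> bool" where
  "rooted_tree V r p \<longleftrightarrow> finite V \<and> r \<in> V \<and> (\<forall>v\<in>V. v \<noteq> r \<longrightarrow> p v \<in> V)
     \<and> (\<forall>v\<in>V. \<exists>n. (p ^^ n) v = r)"

definition tle :: "'a \<Rightarrow> ('a \<Rightarrow> 'a) \<Rightarrow> 'a \<Rightarrow> 'a \<Rightarrow> bool" where
  "tle r p v' v \<longleftrightarrow> (\<exists>n. (p ^^ n) v' = v \<and> (\<forall>k<n. (p ^^ k) v' \<noteq> r))"

definition tadj :: "'a \<Rightarrow> ('a \<Rightarrow> 'a) \<Rightarrow> 'a \<Rightarrow> 'a \<Rightarrow> bool" where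
  "tadj r p x y \<longleftrightarrow> (x \<noteq> r \<and> p x = y) \<or> (y \<noteq> r \<and> p y = x)"

definition ornament :: "'a set \<Rightarrow> 'a \<Rightarrow> ('a \<Rightarrow> 'a) \<Rightarrow> 'a set \<Rightarrow> bool" where
  "ornament V r p S \<longleftrightarrow> S \<noteq> {} \<and> S \<subseteq> V \<and>
     (\<forall>x\<in>S. \<forall>y\<in>S. (x, y) \<in> {(a, b). a \<in> S \<and> b \<in> S \<and> tadj r p a b}\<^sup>*)"

text \<open>ornamentations; outside V the value is fixed to {} for a canonical representation\<close>
definition ornamentation :: "'a set \<Rightarrow> 'a \<Rightarrow> ('a \<Rightarrow> 'a) \<Rightarrow> ('a \<Rightarrow> 'a set) \<Rightarrow> bool" where
  "ornamentation V r p \<delta> \<longleftrightarrow>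
     (\<forall>v\<in>V. ornament V r p (\<delta> v) \<and> v \<in> \<delta> v \<and> (\<forall>w\<in>\<delta> v. tle r p w v \<and> (tle r p v w \<longrightarrow> w = v))) \<and>
     (\<forall>v. v \<notin> V \<longrightarrow> \<delta> v = {}) \<and>
     (\<forall>v\<in>V. \<forall>v'\<in>V. \<delta> v \<subseteq> \<delta> v' \<or> \<delta> v' \<subseteq> \<delta> v \<or> \<delta> v \<inter> \<delta> v' = {})"

definition orn_le :: "'a set \<Rightarrow> ('a \<Rightarrow> 'a set) \<Rightarrow> ('a \<Rightarrow> 'a set) \<Rightarrow> bool" where
  "orn_le V \<delta> \<delta>' \<longleftrightarrow> (\<forall>v\<in>V. \<delta> v \<subseteq> \<delta>' v)"

definition covered_by :: "'a set \<Rightarrow> 'a \<Rightarrow> ('a \<Rightarrow> 'a) \<Rightarrow> ('a \<Rightarrow> 'a set) \<Rightarrow> ('a \<Rightarrow> 'a set) \<Rightarrow> bool" where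
  "covered_by V r p \<delta>' \<delta> \<longleftrightarrow> ornamentation V r p \<delta>' \<and> ornamentation V r p \<delta> \<and>
     orn_le V \<delta>' \<delta> \<and> \<delta>' \<noteq> \<delta> \<and>
     \<not> (\<exists>\<gamma>. ornamentation V r p \<gamma> \<and> orn_le V \<delta>' \<gamma> \<and> orn_le V \<gamma> \<delta> \<and> \<gamma> \<noteq> \<delta>' \<and> \<gamma> \<noteq> \<delta>)"

text \<open>Pop: the meet of delta and all its lower covers; meets in O(T) are pointwise intersections\<close>
definition Pop :: "'a set \<Rightarrow> 'a \<Rightarrow> ('a \<Rightarrow> 'a) \<Rightarrow> ('a \<Rightarrow> 'a set) \<Rightarrow> 'a \<Rightarrow> 'a set" where
  "Pop V r p \<delta> = (\<lambda>v. \<delta> v \<inter> \<Inter>{\<delta>' v | \<delta>'. covered_by V r p \<delta>' \<delta>})"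

definition Delta :: "'a \<Rightarrow> ('a \<Rightarrow> 'a) \<Rightarrow> 'a set \<Rightarrow> 'a \<Rightarrow> 'a set" where
  "Delta r p S u = {w \<in> S. tle r p w u}"

definition wraps :: "'a set \<Rightarrow> 'a \<Rightarrow> ('a \<Rightarrow> 'a) \<Rightarrow> ('a \<Rightarrow> 'a set) \<Rightarrow> 'a \<Rightarrow> 'a \<Rightarrow> bool" where
  "wraps V r p \<delta> v u \<longleftrightarrow> u \<in> V \<and> v \<in> V \<and> u \<noteq> v \<and> \<delta> u \<subseteq> \<delta> v \<and>
     \<not> (\<exists>w\<in>V. \<delta> u \<subset> \<delta> w \<and> \<delta> w \<subset> \<delta> v)"

definition reduction :: "'a \<Rightarrow> ('a \<Rightarrow> 'a) \<Rightarrow> ('a \<Rightarrow> 'a set) \<Rightarrow> 'a \<Rightarrow> 'a \<Rightarrow> 'a set" where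
  "reduction r p \<delta> v u = \<delta> v - Delta r p (\<delta> v) u"

definition delta_red :: "'a \<Rightarrow> ('a \<Rightarrow> 'a) \<Rightarrow> ('a \<Rightarrow> 'a set) \<Rightarrow> 'a \<Rightarrow> 'a \<Rightarrow> ('a \<Rightarrow> 'a set)" where
  "delta_red r p \<delta> u v = \<delta>(v := reduction r p \<delta> v u)"

definition is_reduction :: "'a set \<Rightarrow> 'a \<Rightarrow> ('a \<Rightarrow> 'a) \<Rightarrow> ('a \<Rightarrow> 'a set) \<Rightarrow> 'a \<Rightarrow> 'a set \<Rightarrow> bool" where
  "is_reduction V r p \<delta> v S \<longleftrightarrow> (\<exists>u. wraps V r p \<delta> v u \<and> S = reduction r p \<delta> v u)"

definition minimal_reduction :: "'a set \<Rightarrow> 'a \<Rightarrow> ('a \<Rightarrow> 'a) \<Rightarrow> ('a \<Rightarrow> 'a set) \<Rightarrow> 'a \<Rightarrow> 'a set \<Rightarrow> bool" where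
  "minimal_reduction V r p \<delta> v S \<longleftrightarrow> is_reduction V r p \<delta> v S \<and>
     \<not> (\<exists>S'. is_reduction V r p \<delta> v S' \<and> S \<subset> S')"

definition M :: "'a set \<Rightarrow> 'a \<Rightarrow> ('a \<Rightarrow> 'a) \<Rightarrow> ('a \<Rightarrow> 'a set) \<Rightarrow> 'a \<Rightarrow> 'a set" where
  "M V r p \<delta> v = {u \<in> \<delta> v. wraps V r p \<delta> v u \<and> minimal_reduction V r p \<delta> v (reduction r p \<delta> v u)}"

end

theory Submission
  imports Defs
begin

lemma fp: "(f^^m) ((f^^n) x) = (f^^(m+n)) x" by (simp add: funpow_add)

locale rt = fixes V :: "'a set" and r :: 'a and p :: "'a \<Rightarrow> 'a"
  assumes rt: "rooted_tree V r p"
begin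

lemma finV: "finite V" and rV: "r \<in> V" and pV: "v \<in> V \<Longrightarrow> v \<noteq> r \<Longrightarrow> p v \<in> V"
  and reach: "v \<in> V \<Longrightarrow> \<exists>n. (p^^n) v = r"
  using rt unfolding rooted_tree_def by auto

lemma tle_refl: "tle r p v v" unfolding tle_def by (rule exI[of _ 0]) auto

lemma tle_trans: assumes "tle r p a b" "tle r p b c" shows "tle r p a c"
proof -
  obtain n where n: "(p^^n) a = b" "\<forall>k<n. (p^^k) a \<noteq> r" using assms(1) unfolding tle_def by auto
  obtain m where m: "(p^^m) b = c" "\<forall>k<m. (p^^k) b \<noteq> r" using assms(2) unfolding tle_def by auto
  have "(p^^(m+n)) a = c" using n m fp by metis
  moreover have "\<forall>k<m+n. (p^^k) a \<noteq> r"
  proof (intro allI impI)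
    fix k assume k: "k < m+n"
    show "(p^^k) a \<noteq> r"
    proof (cases "k < n")
      case True then show ?thesis using n by auto
    next
      case False
      then have "(p^^k) a = (p^^(k-n)) b" using n(1) fp[where f=p and m="k-n" and n=n and x=a] by simp
      then show ?thesis using m(2) k False by auto
    qed
  qed
  ultimately show ?thesis unfolding tle_def by blast
qed

lemma no_cycle: assumes "x \<in> V" "n > 0" "(p^^n) x = x" "\<forall>k<n. (p^^k) x \<noteq> r" shows False
proof -
  have "\<forall>k. (p^^k) x \<noteq> r"
  proof
    fix k
    have "(p^^(k mod n)) x = (p^^k) x" using funpow_mod_eq[where f=p and n=n and x=x and m=k] assms(3) by simp
    moreover have "k mod n < n" using assms(2) by simp
    ultimately show "(p^^k) x \<noteq> r" using assms(4) by metis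
  qed
  then show False using reach[OF assms(1)] by auto
qed

lemma tle_antisym: assumes "x \<in> V" "tle r p x y" "tle r p y x" shows "x = y"
proof (rule ccontr)
  assume ne: "x \<noteq> y"
  obtain n where n: "(p^^n) x = y" "\<forall>k<n. (p^^k) x \<noteq> r" using assms(2) unfolding tle_def by auto
  obtain m where m: "(p^^m) y = x" "\<forall>k<m. (p^^k) y \<noteq> r" using assms(3) unfolding tle_def by auto
  have "tle r p x x" using tle_trans[OF assms(2,3)] .
  have "(p^^(m+n)) x = x" using n m fp by metis
  moreover have "n > 0" using n ne by (cases n) auto
  moreover have "\<forall>k<m+n. (p^^k) x \<noteq> r"
  proof (intro allI impI)
    fix k assume k: "k < m+n"
    show "(p^^k) x \<noteq> r"
    proof (cases "k < n")
      case True then show ?thesis using n by auto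
    next
      case False
      then have "(p^^k) x = (p^^(k-n)) y" using n(1) fp[where f=p and m="k-n" and n=n and x=x] by simp
      then show ?thesis using m(2) k False by auto
    qed
  qed
  ultimately show False using no_cycle[OF assms(1), of "m+n"] by auto
qed

lemma tle_step: "c \<noteq> r \<Longrightarrow> tle r p c (p c)"
  unfolding tle_def by (rule exI[of _ 1]) auto

lemma tle_down: assumes "tle r p b y" "b \<noteq> y" shows "tle r p (p b) y" "b \<noteq> r"
proof -
  obtain n where n: "(p^^n) b = y" "\<forall>k<n. (p^^k) b \<noteq> r" using assms(1) unfolding tle_def by auto
  have n0: "n > 0" using n assms(2) by (cases n) auto
  then show "b \<noteq> r" using n(2)[rule_format, of 0] by simp
  have "(p^^(n-1)) (p b) = y" using n(1) n0 fp[where f=p and m="n-1" and n=1 and x=b] by simp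
  moreover have "\<forall>k<n-1. (p^^k) (p b) \<noteq> r"
  proof (intro allI impI)
    fix k assume "k < n-1"
    then have "Suc k < n" by simp
    moreover have "(p^^k) (p b) = (p^^(Suc k)) b" by (simp add: funpow_swap1)
    ultimately show "(p^^k) (p b) \<noteq> r" using n(2) by metis
  qed
  ultimately show "tle r p (p b) y" unfolding tle_def by blast
qed

lemma tle_comp: assumes "tle r p y a" "tle r p y b" shows "tle r p a b \<or> tle r p b a"
proof -
  have *: "tle r p a b" if "(p^^n) y = a" "\<forall>k<n. (p^^k) y \<noteq> r" "(p^^m) y = b" "\<forall>k<m. (p^^k) y \<noteq> r" "n \<le> m"
    for a b n m
  proof -
    have "(p^^(m-n)) a = b" using that fp[where f=p and m="m-n" and n=n and x=y] by simp
    moreover have "\<forall>k<m-n. (p^^k) a \<noteq> r" using that fp[where f=p and n=n and x=y]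
      by (metis add_diff_cancel_right' diff_le_self le_add_diff_inverse less_diff_conv nat_le_linear order_less_le_trans)
    ultimately show ?thesis unfolding tle_def by blast
  qed
  obtain n where n: "(p^^n) y = a" "\<forall>k<n. (p^^k) y \<noteq> r" using assms(1) unfolding tle_def by auto
  obtain m where m: "(p^^m) y = b" "\<forall>k<m. (p^^k) y \<noteq> r" using assms(2) unfolding tle_def by auto
  show ?thesis using *[OF n m] *[OF m n] by linarith
qed


definition RR :: "'a set \<Rightarrow> ('a \<times> 'a) set" where
  "RR S = {(a, b). a \<in> S \<and> b \<in> S \<and> tadj r p a b}"

lemma orn_conn: "ornament V r p S \<Longrightarrow> x \<in> S \<Longrightarrow> y \<in> S \<Longrightarrow> (x, y) \<in> (RR S)\<^sup>*"
  unfolding ornament_def RR_def by blast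

lemma RR_sym: "(a, b) \<in> (RR S)\<^sup>* \<Longrightarrow> (b, a) \<in> (RR S)\<^sup>*"
proof (induction rule: rtrancl_induct)
  case base then show ?case by simp
next
  case (step y z)
  then have "(z, y) \<in> RR S" unfolding RR_def tadj_def by auto
  then show ?case using step(3) by (rule converse_rtrancl_into_rtrancl)
qed

lemma orn_up: assumes "ornament V r p S" "\<forall>w\<in>S. tle r p w v" "v \<in> S" "y \<in> S" "y \<noteq> v"
  shows "p y \<in> S"
proof (rule ccontr)
  assume py: "p y \<notin> S"
  have "(y, v) \<in> (RR S)\<^sup>*" using orn_conn assms by blast
  then have "tle r p v y"
  proof (induction rule: rtrancl_induct)
    case base then show ?case by (rule tle_refl)
  next
    case (step b c)
    then have bc: "c \<in> S" "tadj r p b c" unfolding RR_def by auto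
    show ?case
    proof (cases "b \<noteq> r \<and> p b = c")
      case True
      then show ?thesis using step(3) py bc(1) tle_down by blast
    next
      case False
      then have "c \<noteq> r" "p c = b" using bc(2) unfolding tadj_def by auto
      then show ?thesis using tle_step tle_trans step(3) by metis
    qed
  qed
  moreover have "y \<in> V" using assms(1,4) unfolding ornament_def by auto
  ultimately show False using tle_antisym assms(2,4,5) by blast
qed

lemma orn_conv: assumes "ornament V r p S" "\<forall>w\<in>S. tle r p w v" "v \<in> S" "y \<in> S"
  "tle r p y m" "tle r p m v" shows "m \<in> S"
proof (rule ccontr)
  assume mS: "m \<notin> S"
  obtain n where n: "(p^^n) y = m" "\<forall>k<n. (p^^k) y \<noteq> r" using assms(5) unfolding tle_def by auto
  have "k \<le> n \<Longrightarrow> (p^^k) y \<in> S" for k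
  proof (induction k)
    case 0 then show ?case using assms(4) by simp
  next
    case (Suc k)
    then have IH: "(p^^k) y \<in> S" by simp
    have "(p^^(n-k)) ((p^^k) y) = m" using n(1) Suc(2) fp[where f=p and m="n-k" and n=k and x=y] by simp
    moreover have "\<forall>j<n-k. (p^^j) ((p^^k) y) \<noteq> r" using n(2) fp[where f=p and n=k and x=y]
      by (metis less_diff_conv)
    ultimately have "tle r p ((p^^k) y) m" unfolding tle_def by blast
    moreover have "(p^^k) y \<in> V" using IH assms(1) unfolding ornament_def by auto
    ultimately have "(p^^k) y \<noteq> v" using tle_antisym assms(6) mS assms(3) by metis
    then have "p ((p^^k) y) \<in> S" using orn_up[OF assms(1-3) IH] by blast
    then show ?case by simp
  qed
  then show False using n mS by blast
qed

lemma reach_path: "(\<forall>k\<le>n. (p^^k) y \<in> T) \<Longrightarrow> (\<forall>k<n. (p^^k) y \<noteq> r) \<Longrightarrow> (y, (p^^n) y) \<in> (RR T)\<^sup>*"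
proof (induction n arbitrary: y)
  case 0 then show ?case by simp
next
  case (Suc n)
  have a: "\<forall>k\<le>n. (p^^k) (p y) \<in> T" using Suc(2) by (metis Suc_le_mono funpow_simps_right(2) o_apply)
  have b: "\<forall>k<n. (p^^k) (p y) \<noteq> r" using Suc(3) by (metis Suc_mono funpow_simps_right(2) o_apply)
  have "(p y, (p^^n) (p y)) \<in> (RR T)\<^sup>*" using Suc.IH[OF a b] .
  moreover have "(y, p y) \<in> RR T" using Suc(2)[rule_format, of 0] Suc(2)[rule_format, of 1] Suc(3)[rule_format, of 0]
    unfolding RR_def tadj_def by auto
  ultimately show ?case by (simp add: funpow_swap1 converse_rtrancl_into_rtrancl)
qed


context fixes \<delta> :: "'a \<Rightarrow> 'a set" assumes orn: "ornamentation V r p \<delta>"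
begin

lemma oV: "v \<in> V \<Longrightarrow> ornament V r p (\<delta> v) \<and> v \<in> \<delta> v \<and> (\<forall>w\<in>\<delta> v. tle r p w v)"
  using orn unfolding ornamentation_def by blast
lemma oOut: "v \<notin> V \<Longrightarrow> \<delta> v = {}"
  using orn unfolding ornamentation_def by blast
lemma oNest: "a \<in> V \<Longrightarrow> b \<in> V \<Longrightarrow> \<delta> a \<subseteq> \<delta> b \<or> \<delta> b \<subseteq> \<delta> a \<or> \<delta> a \<inter> \<delta> b = {}"
  using orn unfolding ornamentation_def by blast
lemma oMem: "x \<in> \<delta> v \<Longrightarrow> v \<in> V \<and> x \<in> V \<and> tle r p x v"
  using oV oOut unfolding ornament_def by (metis empty_iff subsetD)
lemma oInj: "a \<in> V \<Longrightarrow> b \<in> V \<Longrightarrow> \<delta> a = \<delta> b \<Longrightarrow> a = b"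
  using oV oMem tle_antisym by metis
lemma oIn: assumes "a \<in> \<delta> b" shows "\<delta> a \<subseteq> \<delta> b"
proof -
  have ab: "a \<in> V" "b \<in> V" "tle r p a b" using oMem assms by auto
  show ?thesis
  proof (rule ccontr)
    assume nt: "\<not> ?thesis"
    then have "\<delta> b \<subseteq> \<delta> a \<or> \<delta> a \<inter> \<delta> b = {}" using oNest ab by blast
    then show False
    proof
      assume "\<delta> b \<subseteq> \<delta> a"
      then have "tle r p b a" using oV oMem ab by blast
      then have "a = b" using tle_antisym ab by blast
      then show False using nt by simp
    next
      assume "\<delta> a \<inter> \<delta> b = {}" then show False using assms oV ab by blast
    qed
  qed
qed

lemma red_eq: "reduction r p \<delta> v u = {w \<in> \<delta> v. \<not> tle r p w u}"
  unfolding reduction_def Delta_def by auto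

lemma red_orn: assumes v: "v \<in> V" and wr: "wraps V r p \<delta> v u"
  shows "ornamentation V r p (delta_red r p \<delta> u v)"
proof -
  define R where "R = reduction r p \<delta> v u"
  have Rd: "R = {w \<in> \<delta> v. \<not> tle r p w u}" unfolding R_def red_eq ..
  have u: "u \<in> V" "u \<noteq> v" "\<delta> u \<subseteq> \<delta> v" "\<not> (\<exists>w\<in>V. \<delta> u \<subset> \<delta> w \<and> \<delta> w \<subset> \<delta> v)"
    using wr unfolding wraps_def by auto
  have uv: "u \<in> \<delta> v" "tle r p u v" using u oV oMem by blast+
  have vR: "v \<in> R" unfolding Rd using oV[OF v] uv u(2) tle_antisym v by blast
  have Rsub: "R \<subseteq> \<delta> v" unfolding Rd by auto
  have ovv: "ornament V r p (\<delta> v)" "\<forall>w\<in>\<delta> v. tle r p w v" "v \<in> \<delta> v" using oV[OF v] by auto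
  have toV: "(y, v) \<in> (RR R)\<^sup>*" if y: "y \<in> R" for y
  proof -
    have yv: "y \<in> \<delta> v" "tle r p y v" "\<not> tle r p y u" using y Rsub ovv unfolding Rd by auto
    obtain n where n: "(p^^n) y = v" "\<forall>k<n. (p^^k) y \<noteq> r" using yv(2) unfolding tle_def by auto
    have "(p^^k) y \<in> R" if k: "k \<le> n" for k
    proof -
      have "tle r p y ((p^^k) y)" unfolding tle_def using k n(2) by (intro exI[of _ k]) auto
      moreover have "(p^^(n-k)) ((p^^k) y) = v" using n(1) k fp[where f=p and m="n-k" and n=k and x=y] by simp
      moreover have "\<forall>j<n-k. (p^^j) ((p^^k) y) \<noteq> r" using n(2) fp[where f=p and n=k and x=y]
        by (metis less_diff_conv)
      ultimately have a: "tle r p y ((p^^k) y)" "tle r p ((p^^k) y) v" unfolding tle_def by blast+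
      have "(p^^k) y \<in> \<delta> v" using orn_conv[OF ovv(1,2,3) yv(1) a] .
      moreover have "\<not> tle r p ((p^^k) y) u" using a(1) yv(3) tle_trans by blast
      ultimately show ?thesis unfolding Rd by blast
    qed
    then show ?thesis using reach_path[of n y R] n by auto
  qed
  have ornR: "ornament V r p R"
  proof -
    have "(x, y) \<in> (RR R)\<^sup>*" if "x \<in> R" "y \<in> R" for x y
      using toV[OF that(1)] RR_sym[OF toV[OF that(2)]] by (rule rtrancl_trans)
    moreover have "R \<subseteq> V" using Rsub ovv(1) unfolding ornament_def by blast
    ultimately show ?thesis using vR unfolding ornament_def RR_def by blast
  qed
  have nest: "\<delta> w \<subseteq> R \<or> R \<subseteq> \<delta> w \<or> \<delta> w \<inter> R = {}" if w: "w \<in> V" "w \<noteq> v" for w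
  proof -
    consider "\<delta> w \<inter> \<delta> v = {}" | "\<delta> v \<subseteq> \<delta> w" | "\<delta> w \<subseteq> \<delta> v" using oNest w v by blast
    then show ?thesis
    proof cases
      case 1 then show ?thesis using Rsub by blast
    next
      case 2 then show ?thesis using Rsub by blast
    next
      case 3
      show ?thesis
      proof (cases "tle r p w u")
        case True
        then have "\<delta> w \<inter> R = {}" unfolding Rd using oMem tle_trans by blast
        then show ?thesis by blast
      next
        case False
        have "\<delta> w \<subseteq> R"
        proof
          fix y assume y: "y \<in> \<delta> w"
          show "y \<in> R"
          proof (rule ccontr)
            assume "y \<notin> R"
            then have yu: "tle r p y u" using y 3 unfolding Rd by blast
            have yw: "tle r p y w" using y oMem by blast
            have "tle r p u w" using tle_comp[OF yu yw] False by blast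
            then have uw: "u \<in> \<delta> w" using orn_conv[of "\<delta> w" w y u] oV[OF w(1)] y yu by blast
            then have "\<delta> u \<subseteq> \<delta> w" using oIn by blast
            moreover have "\<delta> u \<noteq> \<delta> w" using oInj u(1) w(1) False tle_refl by metis
            moreover have "\<delta> w \<noteq> \<delta> v" using oInj v w by metis
            ultimately show False using u(4) w(1) 3 by blast
          qed
        qed
        then show ?thesis by blast
      qed
    qed
  qed
  have p1: "\<forall>w\<in>V. ornament V r p ((\<delta>(v := R)) w) \<and> w \<in> (\<delta>(v := R)) w \<and>
         (\<forall>x\<in>(\<delta>(v := R)) w. tle r p x w \<and> (tle r p w x \<longrightarrow> x = w))"
  proof
    fix w assume w: "w \<in> V"
    show "ornament V r p ((\<delta>(v := R)) w) \<and> w \<in> (\<delta>(v := R)) w \<and>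
         (\<forall>x\<in>(\<delta>(v := R)) w. tle r p x w \<and> (tle r p w x \<longrightarrow> x = w))"
      using oV[OF w] ornR vR Rsub ovv oMem tle_antisym by (cases "w = v") auto
  qed
  have p2: "\<forall>w. w \<notin> V \<longrightarrow> (\<delta>(v := R)) w = {}" using v oOut by auto
  have p3: "\<forall>a\<in>V. \<forall>b\<in>V. (\<delta>(v := R)) a \<subseteq> (\<delta>(v := R)) b \<or> (\<delta>(v := R)) b \<subseteq> (\<delta>(v := R)) a \<or>
          (\<delta>(v := R)) a \<inter> (\<delta>(v := R)) b = {}"
  proof (intro ballI)
    fix a b assume ab: "a \<in> V" "b \<in> V"
    show "(\<delta>(v := R)) a \<subseteq> (\<delta>(v := R)) b \<or> (\<delta>(v := R)) b \<subseteq> (\<delta>(v := R)) a \<or>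
          (\<delta>(v := R)) a \<inter> (\<delta>(v := R)) b = {}"
      using nest[of a] nest[of b] oNest[OF ab] ab by (cases "a = v"; cases "b = v") auto
  qed
  show ?thesis
    unfolding ornamentation_def delta_red_def R_def[symmetric] using p1 p2 p3 by blast
qed

end

lemma lemW: assumes orn: "ornamentation V r p \<delta>" and v: "v \<in> V" and x: "x \<in> \<delta> v" "x \<noteq> v"
  shows "\<exists>u'. wraps V r p \<delta> v u' \<and> x \<in> \<delta> u'"
proof -
  have xV: "x \<in> V" using oMem[OF orn x(1)] by blast
  have xs: "\<delta> x \<subseteq> \<delta> v" using oIn[OF orn x(1)] .
  have xne: "\<delta> x \<noteq> \<delta> v" using oInj[OF orn xV v] x(2) by blast
  define C where "C = {w \<in> V. \<delta> x \<subseteq> \<delta> w \<and> \<delta> w \<subset> \<delta> v}"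
  have "finite (\<delta> ` C)" unfolding C_def using finV by simp
  moreover have "\<delta> x \<in> \<delta> ` C" unfolding C_def using xV xs xne by blast
  ultimately obtain m where m: "m \<in> \<delta> ` C" "\<delta> x \<subseteq> m" "\<forall>b\<in>\<delta> ` C. m \<subseteq> b \<longrightarrow> m = b"
    using finite_has_maximal2 by metis
  then obtain u' where u': "u' \<in> C" "m = \<delta> u'" by blast
  have "wraps V r p \<delta> v u'"
    unfolding wraps_def
  proof (intro conjI)
    show "u' \<in> V" "v \<in> V" "\<delta> u' \<subseteq> \<delta> v" using u' v unfolding C_def by auto
    show "u' \<noteq> v" using u' unfolding C_def by auto
    show "\<not> (\<exists>w\<in>V. \<delta> u' \<subset> \<delta> w \<and> \<delta> w \<subset> \<delta> v)"
    proof
      assume "\<exists>w\<in>V. \<delta> u' \<subset> \<delta> w \<and> \<delta> w \<subset> \<delta> v"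
      then obtain w where w: "w \<in> V" "\<delta> u' \<subset> \<delta> w" "\<delta> w \<subset> \<delta> v" by blast
      then have "w \<in> C" using u' unfolding C_def by auto
      then show False using m(3) u'(2) w(2) by blast
    qed
  qed
  moreover have "x \<in> \<delta> u'" using oV[OF orn xV] m(2) u'(2) by blast
  ultimately show ?thesis by blast
qed

lemma lemD: assumes orn: "ornamentation V r p \<delta>" and og: "ornamentation V r p \<gamma>" and v: "v \<in> V"
  and wr: "wraps V r p \<delta> v u'" and eq: "\<gamma> u' = \<delta> u'" and x: "x \<in> \<delta> u'" "x \<notin> \<gamma> v"
  and sub: "\<gamma> v \<subseteq> \<delta> v"
  shows "\<gamma> v \<subseteq> reduction r p \<delta> v u'"
proof -
  have u: "u' \<in> V" "u' \<noteq> v" "\<delta> u' \<subseteq> \<delta> v" using wr unfolding wraps_def by auto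
  have uv: "u' \<in> \<delta> v" "tle r p u' v" using u oV[OF orn] oMem[OF orn] by blast+
  have ovg: "ornament V r p (\<gamma> v)" "\<forall>w\<in>\<gamma> v. tle r p w v" "v \<in> \<gamma> v" using oV[OF og v] by auto
  have disj: "\<gamma> u' \<inter> \<gamma> v = {}"
  proof -
    consider "\<gamma> u' \<subseteq> \<gamma> v" | "\<gamma> v \<subseteq> \<gamma> u'" | "\<gamma> u' \<inter> \<gamma> v = {}" using oNest[OF og u(1) v] by blast
    then show ?thesis
    proof cases
      case 1 then show ?thesis using x eq by blast
    next
      case 2
      then have "v \<in> \<delta> u'" using ovg eq by blast
      then have "tle r p v u'" using oMem[OF orn] by blast
      then show ?thesis using tle_antisym uv u by blast
    qed
  qed
  show ?thesis
  proof
    fix y assume y: "y \<in> \<gamma> v"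
    show "y \<in> reduction r p \<delta> v u'"
      unfolding red_eq[OF orn]
    proof (intro CollectI conjI)
      show "y \<in> \<delta> v" using y sub by blast
      show "\<not> tle r p y u'"
      proof
        assume "tle r p y u'"
        then have "u' \<in> \<gamma> v" using orn_conv[OF ovg y _ uv(2)] by blast
        moreover have "u' \<in> \<gamma> u'" using oV[OF og u(1)] by blast
        ultimately show False using disj by blast
      qed
    qed
  qed
qed


lemma part1: assumes orn: "ornamentation V r p \<delta>" and v: "v \<in> V" and uM: "u \<in> M V r p \<delta> v"
  shows "covered_by V r p (delta_red r p \<delta> u v) \<delta>"
proof -
  have wr: "wraps V r p \<delta> v u" and mr: "minimal_reduction V r p \<delta> v (reduction r p \<delta> v u)"
    and ud: "u \<in> \<delta> v"
    using uM unfolding M_def by auto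
  define R where "R = reduction r p \<delta> v u"
  have Rsub: "R \<subseteq> \<delta> v" and uR: "u \<notin> R" unfolding R_def red_eq[OF orn] using tle_refl by auto
  have d': "delta_red r p \<delta> u v = \<delta>(v := R)" unfolding delta_red_def R_def ..
  have orn': "ornamentation V r p (\<delta>(v := R))" using red_orn[OF orn v wr] d' by simp
  have le: "orn_le V (\<delta>(v := R)) \<delta>" unfolding orn_le_def using Rsub by auto
  have ne: "\<delta>(v := R) \<noteq> \<delta>" using uR ud by (metis fun_upd_same)
  have nob: "\<not> (\<exists>\<gamma>. ornamentation V r p \<gamma> \<and> orn_le V (\<delta>(v := R)) \<gamma> \<and> orn_le V \<gamma> \<delta> \<and> \<gamma> \<noteq> \<delta>(v := R) \<and> \<gamma> \<noteq> \<delta>)"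
  proof
    assume "\<exists>\<gamma>. ornamentation V r p \<gamma> \<and> orn_le V (\<delta>(v := R)) \<gamma> \<and> orn_le V \<gamma> \<delta> \<and> \<gamma> \<noteq> \<delta>(v := R) \<and> \<gamma> \<noteq> \<delta>"
    then obtain \<gamma> where g: "ornamentation V r p \<gamma>" "orn_le V (\<delta>(v := R)) \<gamma>" "orn_le V \<gamma> \<delta>"
      "\<gamma> \<noteq> \<delta>(v := R)" "\<gamma> \<noteq> \<delta>" by blast
    have eqo: "\<gamma> w = \<delta> w" if "w \<noteq> v" for w
    proof (cases "w \<in> V")
      case True then show ?thesis using g(2,3) that unfolding orn_le_def by force
    next
      case False then show ?thesis using oOut[OF g(1)] oOut[OF orn] by simp
    qed
    have gsub: "\<gamma> v \<subseteq> \<delta> v" and Rg: "R \<subseteq> \<gamma> v" using g(2,3) v unfolding orn_le_def by force+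
    have "\<gamma> v \<noteq> \<delta> v" using eqo g(5) by (metis ext)
    then obtain x where x: "x \<in> \<delta> v" "x \<notin> \<gamma> v" using gsub by blast
    have "x \<noteq> v" using x oV[OF g(1) v] by blast
    then obtain u' where u': "wraps V r p \<delta> v u'" "x \<in> \<delta> u'" using lemW[OF orn v x(1)] by blast
    have "u' \<noteq> v" using u' unfolding wraps_def by auto
    then have "\<gamma> v \<subseteq> reduction r p \<delta> v u'" using lemD[OF orn g(1) v u'(1) eqo u'(2) x(2) gsub] by blast
    moreover have "R \<noteq> \<gamma> v" using eqo g(4) by (metis fun_upd_apply ext)
    ultimately have "R \<subset> reduction r p \<delta> v u'" using Rg by blast
    moreover have "is_reduction V r p \<delta> v (reduction r p \<delta> v u')" unfolding is_reduction_def using u' by blast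
    ultimately show False using mr unfolding minimal_reduction_def R_def by blast
  qed
  show ?thesis unfolding covered_by_def d' using orn' orn le ne nob by blast
qed

lemma part2: assumes orn: "ornamentation V r p \<delta>" and cov: "covered_by V r p \<delta>' \<delta>"
  shows "\<exists>v\<in>V. \<exists>u\<in>M V r p \<delta> v. \<delta>' = delta_red r p \<delta> u v"
proof -
  have o': "ornamentation V r p \<delta>'" and le: "orn_le V \<delta>' \<delta>" and ne: "\<delta>' \<noteq> \<delta>"
    and nob: "\<not> (\<exists>\<gamma>. ornamentation V r p \<gamma> \<and> orn_le V \<delta>' \<gamma> \<and> orn_le V \<gamma> \<delta> \<and> \<gamma> \<noteq> \<delta>' \<and> \<gamma> \<noteq> \<delta>)"
    using cov unfolding covered_by_def by auto
  define D where "D = {w \<in> V. \<delta>' w \<noteq> \<delta> w}"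
  have "D \<noteq> {}"
  proof
    assume "D = {}"
    then have "\<delta>' w = \<delta> w" for w using oOut[OF o'] oOut[OF orn] unfolding D_def by (cases "w \<in> V") auto
    then show False using ne by blast
  qed
  then obtain w0 where "w0 \<in> D" by blast
  have "finite (\<delta> ` D)" unfolding D_def using finV by simp
  then obtain m where m: "m \<in> \<delta> ` D" "\<forall>b\<in>\<delta> ` D. b \<subseteq> m \<longrightarrow> m = b"
    using finite_has_minimal2[of "\<delta> ` D" "\<delta> w0"] \<open>w0 \<in> D\<close> by blast
  then obtain v where v: "v \<in> D" "m = \<delta> v" by blast
  have vV: "v \<in> V" using v unfolding D_def by auto
  have below: "\<delta>' w = \<delta> w" if "w \<in> V" "\<delta> w \<subset> \<delta> v" for w
    using m v that unfolding D_def by blast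
  have sub: "\<delta>' v \<subseteq> \<delta> v" using le vV unfolding orn_le_def by blast
  then obtain x where x: "x \<in> \<delta> v" "x \<notin> \<delta>' v" using v unfolding D_def by blast
  have "x \<noteq> v" using x oV[OF o' vV] by blast
  then obtain u' where u': "wraps V r p \<delta> v u'" "x \<in> \<delta> u'" using lemW[OF orn vV x(1)] by blast
  have u'V: "u' \<in> V" "u' \<noteq> v" "\<delta> u' \<subseteq> \<delta> v" using u' unfolding wraps_def by auto
  then have "\<delta> u' \<noteq> \<delta> v" using oInj[OF orn] vV by metis
  then have "\<delta>' u' = \<delta> u'" using below u'V by blast
  then have s1: "\<delta>' v \<subseteq> reduction r p \<delta> v u'" using lemD[OF orn o' vV u'(1) _ u'(2) x(2) sub] by blast
  define RS where "RS = {S. is_reduction V r p \<delta> v S}"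
  have "RS \<subseteq> Pow (\<delta> v)" unfolding RS_def is_reduction_def reduction_def by auto
  moreover have "finite (\<delta> v)" using oV[OF orn vV] finV unfolding ornament_def by (meson rev_finite_subset)
  ultimately have fRS: "finite RS" by (meson finite_Pow_iff rev_finite_subset)
  have "reduction r p \<delta> v u' \<in> RS" unfolding RS_def is_reduction_def using u' by blast
  then obtain S where S: "S \<in> RS" "reduction r p \<delta> v u' \<subseteq> S" "\<forall>b\<in>RS. S \<subseteq> b \<longrightarrow> S = b"
    using finite_has_maximal2[OF fRS] by metis
  then obtain u where u: "wraps V r p \<delta> v u" "S = reduction r p \<delta> v u"
    unfolding RS_def is_reduction_def by blast
  have mr: "minimal_reduction V r p \<delta> v S"
    unfolding minimal_reduction_def using S unfolding RS_def by blast
  have ud: "u \<in> \<delta> v" using u(1) oV[OF orn] unfolding wraps_def by blast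
  have uM: "u \<in> M V r p \<delta> v" unfolding M_def using ud u mr by blast
  have cv: "covered_by V r p (delta_red r p \<delta> u v) \<delta>" using part1[OF orn vV uM] .
  have "orn_le V \<delta>' (delta_red r p \<delta> u v)"
    unfolding orn_le_def delta_red_def using le s1 S(2) u(2) unfolding orn_le_def by auto
  then have "delta_red r p \<delta> u v = \<delta>'" using nob cv unfolding covered_by_def by blast
  then show ?thesis using vV uM by metis
qed

end

theorem lemma2p4:
  fixes V :: "'a set" and r :: 'a and p :: "'a \<Rightarrow> 'a" and \<delta> :: "'a \<Rightarrow> 'a set"
  assumes "rooted_tree V r p" and "ornamentation V r p \<delta>"
  shows "(\<forall>v\<in>V. \<forall>u\<in>M V r p \<delta> v. covered_by V r p (delta_red r p \<delta> u v) \<delta>)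
    \<and> (\<forall>\<delta>'. covered_by V r p \<delta>' \<delta> \<longrightarrow> (\<exists>v\<in>V. \<exists>u\<in>M V r p \<delta> v. \<delta>' = delta_red r p \<delta> u v))
    \<and> (\<forall>v\<in>V. Pop V r p \<delta> v =
         (if M V r p \<delta> v = {} then \<delta> v else (\<Inter>u\<in>M V r p \<delta> v. delta_red r p \<delta> u v v)))"
proof -
  interpret rt V r p using assms(1) by unfold_locales
  have P1: "\<forall>v\<in>V. \<forall>u\<in>M V r p \<delta> v. covered_by V r p (delta_red r p \<delta> u v) \<delta>"
    using part1[OF assms(2)] by blast
  have P2: "\<forall>\<delta>'. covered_by V r p \<delta>' \<delta> \<longrightarrow> (\<exists>v\<in>V. \<exists>u\<in>M V r p \<delta> v. \<delta>' = delta_red r p \<delta> u v)"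
    using part2[OF assms(2)] by blast
  have P3: "Pop V r p \<delta> v =
         (if M V r p \<delta> v = {} then \<delta> v else (\<Inter>u\<in>M V r p \<delta> v. delta_red r p \<delta> u v v))"
    if v: "v \<in> V" for v
  proof -
    define C where "C = {\<delta>' v | \<delta>'. covered_by V r p \<delta>' \<delta>}"
    have dv: "delta_red r p \<delta> u v v = reduction r p \<delta> v u" for u unfolding delta_red_def by simp
    have C1: "C \<subseteq> insert (\<delta> v) ((\<lambda>u. reduction r p \<delta> v u) ` M V r p \<delta> v)"
    proof
      fix c assume "c \<in> C"
      then obtain \<delta>' where c: "c = \<delta>' v" "covered_by V r p \<delta>' \<delta>" unfolding C_def by blast
      then obtain w u where "w \<in> V" "u \<in> M V r p \<delta> w" "\<delta>' = delta_red r p \<delta> u w" using P2 by blast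
      then show "c \<in> insert (\<delta> v) ((\<lambda>u. reduction r p \<delta> v u) ` M V r p \<delta> v)"
        using c unfolding delta_red_def by (cases "w = v") auto
    qed
    have C2: "reduction r p \<delta> v u \<in> C" if "u \<in> M V r p \<delta> v" for u
    proof -
      have "covered_by V r p (delta_red r p \<delta> u v) \<delta>" using P1 v that by blast
      then have "delta_red r p \<delta> u v v \<in> C" unfolding C_def by blast
      then show ?thesis unfolding dv .
    qed
    have rs: "reduction r p \<delta> v u \<subseteq> \<delta> v" for u unfolding reduction_def by auto
    have "Pop V r p \<delta> v = \<delta> v \<inter> \<Inter>C" unfolding Pop_def C_def by simp
    also have "\<dots> = (if M V r p \<delta> v = {} then \<delta> v else (\<Inter>u\<in>M V r p \<delta> v. delta_red r p \<delta> u v v))"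
    proof (cases "M V r p \<delta> v = {}")
      case True then show ?thesis using C1 by auto
    next
      case False
      have "\<delta> v \<inter> \<Inter>C = (\<Inter>u\<in>M V r p \<delta> v. reduction r p \<delta> v u)"
      proof
        show "\<delta> v \<inter> \<Inter>C \<subseteq> (\<Inter>u\<in>M V r p \<delta> v. reduction r p \<delta> v u)" using C2 by blast
      next
        show "(\<Inter>u\<in>M V r p \<delta> v. reduction r p \<delta> v u) \<subseteq> \<delta> v \<inter> \<Inter>C"
        proof
          fix y assume y: "y \<in> (\<Inter>u\<in>M V r p \<delta> v. reduction r p \<delta> v u)"
          obtain u0 where "u0 \<in> M V r p \<delta> v" using False by blast
          then have yd: "y \<in> \<delta> v" using y rs by blast
          have "y \<in> c" if "c \<in> C" for c
          proof -
            have "c \<in> insert (\<delta> v) ((\<lambda>u. reduction r p \<delta> v u) ` M V r p \<delta> v)" using C1 that by blast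
            then show ?thesis using y yd by blast
          qed
          then show "y \<in> \<delta> v \<inter> \<Inter>C" using yd by blast
        qed
      qed
      then show ?thesis unfolding dv using False by simp
    qed
    finally show ?thesis .
  qed
  show ?thesis using P1 P2 P3 by blast
qed

end
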